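(* Let $x\ge 0$ and $y>0$ (the approximation is intended for the regime $x\ll y$). Then $$R_C(x,y)=\frac{\pi}{2\sqrt y}-\frac{\sqrt x}{y}+\frac{\pi x\theta}{4y^{3/2}},$$ where $\theta$ satisfies $\frac{1}{1+\sqrt{x/y}}\le\theta\le 1$, with equalities iff $x=0$.
   Context: For $x\ge 0$, $y>0$: $R_C(x,y)=\frac12\int_0^\infty (t+x)^{-1/2}(t+y)^{-1}\,dt$. *)

theory Defs
  imports "HOL-Analysis.Analysis"
begin

definition R_C :: "real \<Rightarrow> real \<Rightarrow> real" where
  "R_C x y = (1/2) * integral {0..} (\<lambda>t. (t + x) powr (-1/2) * inverse (t + y))"

end

theory Submission
  imports Defs "HOL-Real_Asymp.Real_Asymp"
begin

lemma ftc_inf: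
  fixes F f :: "real \<Rightarrow> real"
  assumes cont: "continuous_on {a..} F"
    and der: "\<And>t. t > a \<Longrightarrow> (F has_real_derivative f t) (at t)"
    and nonneg: "\<And>t. t \<ge> a \<Longrightarrow> f t \<ge> 0"
    and lim: "(F \<longlongrightarrow> L) at_top"
  shows "(f has_integral (L - F a)) {a..}"
proof (rule has_integral_to_inf)
  have I: "(f has_integral (F b - F a)) {a..b}" if "a \<le> b" for b
  proof (cases "a = b")
    case True then show ?thesis by (simp add: has_integral_refl)
  next
    case False
    with that have "a < b" by simp
    show ?thesis
      apply (rule fundamental_theorem_of_calculus_interior[OF that])
      using cont apply (rule continuous_on_subset) apply auto[1]
      using der by (auto simp: has_real_derivative_iff_has_vector_derivative[symmetric])
  qed
  show "f integrable_on {a..b}" for b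
    by (cases "a \<le> b") (use I in auto)
  have "\<forall>\<^sub>F b in at_top. integral {a..b} f = F b - F a"
    using eventually_ge_at_top[of a] by (rule eventually_mono) (use I integral_unique in blast)
  moreover have "((\<lambda>b. F b - F a) \<longlongrightarrow> L - F a) at_top"
    by (intro tendsto_intros lim)
  ultimately show "((\<lambda>b. integral {a..b} f) \<longlongrightarrow> L - F a) at_top"
    by (simp add: filterlim_cong tendsto_cong)
qed (use nonneg in auto)

definition vv :: "real \<Rightarrow> real \<Rightarrow> real" where "vv x t = sqrt (t + x) - sqrt x"
definition DD :: "real \<Rightarrow> real \<Rightarrow> real" where "DD x t = 1 / (2 * sqrt (t + x))"

lemma vv_deriv: "x \<ge> 0 \<Longrightarrow> t > 0 \<Longrightarrow> (vv x has_real_derivative DD x t) (at t)"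
  unfolding vv_def DD_def
  by (auto intro!: derivative_eq_intros simp: field_simps)

lemma vv_lim: "x \<ge> 0 \<Longrightarrow> filterlim (vv x) at_top at_top"
  unfolding vv_def by real_asymp

lemma vv_nonneg: "x \<ge> 0 \<Longrightarrow> t \<ge> 0 \<Longrightarrow> vv x t \<ge> 0"
  unfolding vv_def by (simp add: real_sqrt_le_mono)
lemma vv_pos: "x \<ge> 0 \<Longrightarrow> t > 0 \<Longrightarrow> vv x t > 0"
  unfolding vv_def by simp

lemma ftc_comp:
  fixes G P :: "real \<Rightarrow> real"
  assumes x: "x \<ge> 0"
    and G: "\<And>v. v \<ge> 0 \<Longrightarrow> (G has_real_derivative P v) (at v)"
    and P: "\<And>v. v \<ge> 0 \<Longrightarrow> P v \<ge> 0"
    and lim: "(G \<longlongrightarrow> L) at_top"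
  shows "((\<lambda>t. DD x t * P (vv x t)) has_integral (L - G 0)) {0..}"
proof -
  have "((\<lambda>t. DD x t * P (vv x t)) has_integral (L - G (vv x 0))) {0..}"
  proof (rule ftc_inf)
    show "continuous_on {0..} (\<lambda>t. G (vv x t))"
    proof (rule continuous_on_compose2[of "{0..}" G])
      show "continuous_on {0..} G"
        using G by (intro continuous_at_imp_continuous_on) (auto dest: DERIV_isCont)
      show "continuous_on {0..} (vv x)" unfolding vv_def by (intro continuous_intros) 
      show "vv x ` {0..} \<subseteq> {0..}" using vv_nonneg[OF x] by auto
    qed
    show "((\<lambda>t. G (vv x t)) has_real_derivative DD x t * P (vv x t)) (at t)" if "t > 0" for t
      using DERIV_chain2[OF G[of "vv x t"] vv_deriv[OF x that]] vv_nonneg[OF x, of t] that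
      by (simp add: mult.commute)
    show "DD x t * P (vv x t) \<ge> 0" if "t \<ge> 0" for t
      using P[OF vv_nonneg[OF x that]] that x by (simp add: DD_def)
    show "((\<lambda>t. G (vv x t)) \<longlongrightarrow> L) at_top"
      using filterlim_compose[OF lim vv_lim[OF x]] by (simp add: o_def)
  qed
  then show ?thesis by (simp add: vv_def)
qed


lemma int_p1:
  assumes x: "x \<ge> 0" and r: "r > 0"
  shows "((\<lambda>t. DD x t * (1 / ((vv x t)\<^sup>2 + r\<^sup>2))) has_integral (pi / (2 * r))) {0..}"
proof -
  have "((\<lambda>t. DD x t * (1 / ((vv x t)\<^sup>2 + r\<^sup>2))) has_integral (pi / (2 * r) - arctan (0 / r) / r)) {0..}"
  proof (rule ftc_comp[OF x])
    show "((\<lambda>v. arctan (v / r) / r) has_real_derivative 1 / (v\<^sup>2 + r\<^sup>2)) (at v)" for v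
    proof -
      have p: "v\<^sup>2 + r\<^sup>2 > 0" using r by (simp add: add_nonneg_pos)
      have d0: "((\<lambda>v. v / r) has_real_derivative 1 / r) (at v)"
        by (rule DERIV_cdivide[OF DERIV_ident])
      have d: "((\<lambda>v. arctan (v / r) / r) has_real_derivative inverse (1 + (v / r)\<^sup>2) * (1 / r) / r) (at v)"
        by (rule DERIV_cdivide[OF DERIV_chain2[OF DERIV_arctan d0]])
      have e: "inverse (1 + (v / r)\<^sup>2) * (1 / r) / r = 1 / (v\<^sup>2 + r\<^sup>2)"
      proof -
        have "(1 + (v / r)\<^sup>2) * r * r = v\<^sup>2 + r\<^sup>2" using r by (simp add: field_simps power2_eq_square)
        then show ?thesis by (simp add: divide_divide_eq_left inverse_eq_divide)
      qed
      show ?thesis using d unfolding e .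
    qed
    show "0 \<le> 1 / (v\<^sup>2 + r\<^sup>2)" for v by (simp add: add_nonneg_nonneg)
    show "((\<lambda>v. arctan (v / r) / r) \<longlongrightarrow> pi / (2 * r)) at_top"
    proof -
      have "((\<lambda>v. arctan (v / r)) \<longlongrightarrow> pi / 2) at_top"
        by (rule filterlim_compose[OF tendsto_arctan_at_top]) (use r in real_asymp)
      then have "((\<lambda>v. arctan (v / r) / r) \<longlongrightarrow> (pi / 2) / r) at_top"
        by (rule tendsto_divide[OF _ tendsto_const]) (use r in simp)
      then show ?thesis by simp
    qed
  qed
  then show ?thesis by simp
qed

lemma int_p2:
  assumes x: "x \<ge> 0" and r: "r > 0" and a: "a \<ge> 0"
  shows "((\<lambda>t. DD x t * (2 * a * vv x t / ((vv x t)\<^sup>2 + r\<^sup>2)\<^sup>2)) has_integral (a / r\<^sup>2)) {0..}"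
proof -
  have "((\<lambda>t. DD x t * (2 * a * vv x t / ((vv x t)\<^sup>2 + r\<^sup>2)\<^sup>2)) has_integral (0 - (- a / (0\<^sup>2 + r\<^sup>2)))) {0..}"
  proof (rule ftc_comp[OF x])
    show "((\<lambda>v. - a / (v\<^sup>2 + r\<^sup>2)) has_real_derivative 2 * a * v / (v\<^sup>2 + r\<^sup>2)\<^sup>2) (at v)" for v
      using r by (auto intro!: derivative_eq_intros simp: field_simps power2_eq_square add_pos_pos)
    show "0 \<le> 2 * a * v / (v\<^sup>2 + r\<^sup>2)\<^sup>2" if "v \<ge> 0" for v using a that by simp
    show "((\<lambda>v. - a / (v\<^sup>2 + r\<^sup>2)) \<longlongrightarrow> 0) at_top"
      using r by real_asymp
  qed
  then show ?thesis by simp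
qed

lemma int_q:
  assumes x: "x \<ge> 0" and r: "r > 0" and a: "a \<ge> 0"
  shows "((\<lambda>t. DD x t * (4 * a\<^sup>2 * (vv x t)\<^sup>2 / ((vv x t)\<^sup>2 + r\<^sup>2) ^ 3)) has_integral (a\<^sup>2 * pi / (4 * r ^ 3))) {0..}"
proof -
  define H where "H v = 4 * a\<^sup>2 * (v * (v\<^sup>2 - r\<^sup>2) / (8 * r\<^sup>2 * (v\<^sup>2 + r\<^sup>2)\<^sup>2) + arctan (v / r) / (8 * r ^ 3))" for v
  have "((\<lambda>t. DD x t * (4 * a\<^sup>2 * (vv x t)\<^sup>2 / ((vv x t)\<^sup>2 + r\<^sup>2) ^ 3)) has_integral (a\<^sup>2 * pi / (4 * r ^ 3) - H 0)) {0..}"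
  proof (rule ftc_comp[OF x])
    show "(H has_real_derivative 4 * a\<^sup>2 * v\<^sup>2 / (v\<^sup>2 + r\<^sup>2) ^ 3) (at v)" for v
    proof -
      have p: "v\<^sup>2 + r\<^sup>2 > 0" using r by (simp add: add_nonneg_pos)
      define w where "w = v\<^sup>2 + r\<^sup>2"
      have w0: "w > 0" using p w_def by simp
      have dN: "((\<lambda>v. v * (v\<^sup>2 - r\<^sup>2)) has_real_derivative 3 * v\<^sup>2 - r\<^sup>2) (at v)"
        by (auto intro!: derivative_eq_intros simp: algebra_simps power2_eq_square)
      have dD: "((\<lambda>v. 8 * r\<^sup>2 * (v\<^sup>2 + r\<^sup>2)\<^sup>2) has_real_derivative 32 * r\<^sup>2 * v * w) (at v)"
        unfolding w_def by (auto intro!: derivative_eq_intros simp: algebra_simps power2_eq_square)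
      have d1a: "((\<lambda>v. v * (v\<^sup>2 - r\<^sup>2) / (8 * r\<^sup>2 * (v\<^sup>2 + r\<^sup>2)\<^sup>2)) has_real_derivative
          ((3 * v\<^sup>2 - r\<^sup>2) * (8 * r\<^sup>2 * (v\<^sup>2 + r\<^sup>2)\<^sup>2) - v * (v\<^sup>2 - r\<^sup>2) * (32 * r\<^sup>2 * v * w))
            / ((8 * r\<^sup>2 * (v\<^sup>2 + r\<^sup>2)\<^sup>2) * (8 * r\<^sup>2 * (v\<^sup>2 + r\<^sup>2)\<^sup>2))) (at v)"
        by (rule DERIV_divide[OF dN dD]) (use r p in simp)
      have eq1: "((3 * v\<^sup>2 - r\<^sup>2) * (8 * r\<^sup>2 * w\<^sup>2) - v * (v\<^sup>2 - r\<^sup>2) * (32 * r\<^sup>2 * v * w))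
            / ((8 * r\<^sup>2 * w\<^sup>2) * (8 * r\<^sup>2 * w\<^sup>2))
          = ((3 * v\<^sup>2 - r\<^sup>2) * w - 4 * v\<^sup>2 * (v\<^sup>2 - r\<^sup>2)) / (8 * r\<^sup>2 * w ^ 3)"
      proof -
        define X where "X = (3 * v\<^sup>2 - r\<^sup>2) * w - 4 * v\<^sup>2 * (v\<^sup>2 - r\<^sup>2)"
        have n: "(3 * v\<^sup>2 - r\<^sup>2) * (8 * r\<^sup>2 * w\<^sup>2) - v * (v\<^sup>2 - r\<^sup>2) * (32 * r\<^sup>2 * v * w) = (8 * r\<^sup>2 * w) * X"
          unfolding X_def by (simp add: algebra_simps power2_eq_square)
        have dd: "(8 * r\<^sup>2 * w\<^sup>2) * (8 * r\<^sup>2 * w\<^sup>2) = (8 * r\<^sup>2 * w) * (8 * r\<^sup>2 * w ^ 3)"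
          by (simp add: algebra_simps power2_eq_square power3_eq_cube)
        have nz: "8 * r\<^sup>2 * w \<noteq> 0" using r w0 by simp
        show ?thesis unfolding n dd X_def[symmetric] using nz by (rule mult_divide_mult_cancel_left)
      qed
      have d1: "((\<lambda>v. v * (v\<^sup>2 - r\<^sup>2) / (8 * r\<^sup>2 * (v\<^sup>2 + r\<^sup>2)\<^sup>2)) has_real_derivative
          ((3 * v\<^sup>2 - r\<^sup>2) * w - 4 * v\<^sup>2 * (v\<^sup>2 - r\<^sup>2)) / (8 * r\<^sup>2 * w ^ 3)) (at v)"
        using d1a unfolding w_def[symmetric] eq1 .
      have d0: "((\<lambda>v. v / r) has_real_derivative 1 / r) (at v)"
        by (rule DERIV_cdivide[OF DERIV_ident])
      have d2a: "((\<lambda>v. arctan (v / r) / (8 * r ^ 3)) has_real_derivative inverse (1 + (v / r)\<^sup>2) * (1 / r) / (8 * r ^ 3)) (at v)"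
        by (rule DERIV_cdivide[OF DERIV_chain2[OF DERIV_arctan d0]])
      have eq2: "inverse (1 + (v / r)\<^sup>2) * (1 / r) / (8 * r ^ 3) = 1 / (8 * r\<^sup>2 * w)"
      proof -
        have "1 + (v / r)\<^sup>2 = w / r\<^sup>2" using r unfolding w_def by (simp add: field_simps power2_eq_square)
        then have "inverse (1 + (v / r)\<^sup>2) = r\<^sup>2 / w" by simp
        then show ?thesis using r w0 by (simp add: power2_eq_square power3_eq_cube field_simps)
      qed
      have d2: "((\<lambda>v. arctan (v / r) / (8 * r ^ 3)) has_real_derivative 1 / (8 * r\<^sup>2 * w)) (at v)"
        using d2a unfolding eq2 .
      have e: "((3 * v\<^sup>2 - r\<^sup>2) * w - 4 * v\<^sup>2 * (v\<^sup>2 - r\<^sup>2)) / (8 * r\<^sup>2 * w ^ 3) + 1 / (8 * r\<^sup>2 * w)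
            = v\<^sup>2 / w ^ 3"
      proof -
        have "w > 0" by (rule w0)
        then have "((3 * v\<^sup>2 - r\<^sup>2) * w - 4 * v\<^sup>2 * (v\<^sup>2 - r\<^sup>2)) / (8 * r\<^sup>2 * w ^ 3) + 1 / (8 * r\<^sup>2 * w)
            = ((3 * v\<^sup>2 - r\<^sup>2) * w - 4 * v\<^sup>2 * (v\<^sup>2 - r\<^sup>2) + w\<^sup>2) / (8 * r\<^sup>2 * w ^ 3)"
          using r by (simp add: field_simps power2_eq_square power3_eq_cube)
        also have "(3 * v\<^sup>2 - r\<^sup>2) * w - 4 * v\<^sup>2 * (v\<^sup>2 - r\<^sup>2) + w\<^sup>2 = 8 * r\<^sup>2 * v\<^sup>2"
          unfolding w_def by (simp add: algebra_simps power2_eq_square)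
        finally show ?thesis using r by simp
      qed
      have "(H has_real_derivative 4 * a\<^sup>2 * (((3 * v\<^sup>2 - r\<^sup>2) * w - 4 * v\<^sup>2 * (v\<^sup>2 - r\<^sup>2)) / (8 * r\<^sup>2 * w ^ 3) + 1 / (8 * r\<^sup>2 * w))) (at v)"
        unfolding H_def by (intro DERIV_cmult DERIV_add d1 d2)
      then show ?thesis using e unfolding w_def by simp
    qed
    show "0 \<le> 4 * a\<^sup>2 * v\<^sup>2 / (v\<^sup>2 + r\<^sup>2) ^ 3" for v by (simp add: add_nonneg_nonneg)
    show "(H \<longlongrightarrow> a\<^sup>2 * pi / (4 * r ^ 3)) at_top"
    proof -
      have "((\<lambda>v. arctan (v / r)) \<longlongrightarrow> pi / 2) at_top"
        by (rule filterlim_compose[OF tendsto_arctan_at_top]) (use r in real_asymp)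
      moreover have "((\<lambda>v. v * (v\<^sup>2 - r\<^sup>2) / (8 * r\<^sup>2 * (v\<^sup>2 + r\<^sup>2)\<^sup>2)) \<longlongrightarrow> 0) at_top"
        using r by real_asymp
      ultimately have "(H \<longlongrightarrow> 4 * a\<^sup>2 * (0 + (pi/2) / (8 * r ^ 3))) at_top"
        unfolding H_def by (intro tendsto_intros) (use r in auto)
      then show ?thesis by (simp add: field_simps)
    qed
  qed
  then show ?thesis by (simp add: H_def)
qed


lemma integral_pos:
  fixes h :: "real \<Rightarrow> real"
  assumes cont: "continuous_on {0..} h" and int: "h integrable_on {0..}"
    and nn: "\<And>t. t \<ge> 0 \<Longrightarrow> h t \<ge> 0" and c: "c > 0" and hc: "h c > 0"
  shows "integral {0..} h > 0"
proof -
  have "isCont h c"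
  proof -
    have "continuous_on {0<..} h" using cont by (rule continuous_on_subset) auto
    then show ?thesis using c by (simp add: continuous_on_eq_continuous_at)
  qed
  then obtain d where d: "d > 0" and dh: "\<And>t. dist t c < d \<Longrightarrow> dist (h t) (h c) < h c / 2"
    using hc unfolding continuous_at_eps_delta by (metis half_gt_zero)
  define e where "e = min d c / 2"
  have e: "e > 0" "e < d" using d c by (auto simp: e_def)
  have lo: "h t \<ge> h c / 2" if "t \<in> {c..c+e}" for t
  proof -
    have "\<bar>h t - h c\<bar> < h c / 2" using dh[of t] that e by (auto simp: dist_real_def)
    then show ?thesis by linarith
  qed
  have ci: "continuous_on {c..c+e} h"
    using cont by (rule continuous_on_subset) (use c in auto)
  have "e * (h c / 2) \<le> integral {c..c+e} h"
  proof -
    have "integral {c..c+e} (\<lambda>_. h c / 2) \<le> integral {c..c+e} h"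
      by (rule integral_le) (use lo integrable_continuous_interval[OF ci] in auto)
    then show ?thesis using e by simp
  qed
  also have "\<dots> \<le> integral {0..} h"
    by (rule integral_subset_le) (use c integrable_continuous_interval[OF ci] int nn in auto)
  finally show ?thesis using e hc by (smt (verit) mult_pos_pos half_gt_zero)
qed

lemma integrable_dom:
  fixes h q :: "real \<Rightarrow> real"
  assumes "continuous_on {0..} h" "q integrable_on {0..}" "\<And>t. t \<ge> 0 \<Longrightarrow> \<bar>h t\<bar> \<le> q t"
  shows "h integrable_on {0..}"
  by (rule measurable_bounded_by_integrable_imp_integrable[OF continuous_imp_measurable_on_sets_lebesgue])
     (use assms in auto)


lemma cont_comp:
  assumes x: "x > 0" and P: "continuous_on {0..} P"
  shows "continuous_on {0..} (\<lambda>t. DD x t * P (vv x t))"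
proof -
  have "continuous_on {0..} (\<lambda>t. P (vv x t))"
  proof (rule continuous_on_compose2[OF P])
    show "continuous_on {0..} (vv x)" unfolding vv_def by (intro continuous_intros)
    show "vv x ` {0..} \<subseteq> {0..}" using vv_nonneg[of x] x by auto
  qed
  moreover have "continuous_on {0..} (DD x)" unfolding DD_def
    using x by (intro continuous_intros) auto
  ultimately show ?thesis by (intro continuous_intros)
qed

lemma abs_id:
  fixes w W p :: real
  assumes "w > 0" "W > 0" "W = w + p"
  shows "1 / W = 1 / w - p / w\<^sup>2 + p\<^sup>2 / (w\<^sup>2 * W)"
proof -
  have "(1 / w - p / w\<^sup>2 + p\<^sup>2 / (w\<^sup>2 * W)) * (w\<^sup>2 * W) = w * W - p * W + p\<^sup>2"
    using assms(1,2) by (simp add: algebra_simps power2_eq_square)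
  also have "\<dots> = w\<^sup>2" using assms(3) by (simp add: power2_eq_square algebra_simps)
  finally have "1 / w - p / w\<^sup>2 + p\<^sup>2 / (w\<^sup>2 * W) = w\<^sup>2 / (w\<^sup>2 * W)"
    using assms(1,2) by (simp add: eq_divide_eq)
  also have "\<dots> = 1 / W" using assms(1) by simp
  finally show ?thesis ..
qed

lemma key_identity:
  fixes x y t :: real
  assumes x: "x \<ge> 0" and y: "y > 0" and t: "t \<ge> 0"
  defines "a \<equiv> sqrt x" and "r \<equiv> sqrt y"
  shows "(t + x) powr (-1/2) * inverse (t + y) = 2 * (DD x t * (1 / ((vv x t)\<^sup>2 + r\<^sup>2))
     - DD x t * (2 * a * vv x t / ((vv x t)\<^sup>2 + r\<^sup>2)\<^sup>2)
     + DD x t * (4 * a\<^sup>2 * (vv x t)\<^sup>2 / (((vv x t)\<^sup>2 + r\<^sup>2)\<^sup>2 * ((vv x t)\<^sup>2 + 2 * a * vv x t + r\<^sup>2))))"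
proof (cases "t + x = 0")
  case True
  have d: "DD x t = 0" by (simp add: DD_def True)
  have p: "(t + x) powr (-1/2) = 0" by (simp add: True)
  show ?thesis unfolding d p by simp
next
  case False
  then have tx: "t + x > 0" using x t by simp
  define S where "S = sqrt (t + x)"
  define v where "v = vv x t"
  have S: "S > 0" "S\<^sup>2 = t + x" using tx by (auto simp: S_def)
  have a2: "a\<^sup>2 = x" "a \<ge> 0" using x by (auto simp: a_def)
  have r2: "r\<^sup>2 = y" "r > 0" using y by (auto simp: r_def)
  have v: "v = S - a" "v \<ge> 0" using vv_nonneg[OF x t] by (auto simp: v_def vv_def S_def a_def)
  have W: "v\<^sup>2 + 2 * a * v + r\<^sup>2 = t + y"
  proof -
    have "(v + a)\<^sup>2 = t + x" using S v by simp
    then have "v * v + 2 * a * v + a * a = t + x" by (simp add: power2_eq_square algebra_simps)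
    moreover have "a * a = x" "r * r = y" using a2 r2 by (simp_all add: power2_eq_square)
    ultimately show ?thesis by (simp add: power2_eq_square)
  qed
  have w: "v\<^sup>2 + r\<^sup>2 > 0" using r2(2) by (simp add: add_nonneg_pos)
  have W0: "t + y > 0" using t y by simp
  have g: "(t + x) powr (-1/2) = 1 / S"
  proof -
    have m: "(-1/2::real) = - (1/2)" by simp
    have "(t + x) powr (-1/2) = (t + x) powr (-(1/2))" by (simp only: m)
    also have "\<dots> = inverse ((t + x) powr (1/2))" by (rule powr_minus)
    also have "\<dots> = inverse (sqrt (t + x))" using tx by (simp only: powr_half_sqrt less_imp_le)
    finally show ?thesis by (simp only: S_def inverse_eq_divide)
  qed
  have DD: "DD x t = 1 / (2 * S)" by (simp add: DD_def S_def)
  have gen: "\<And>D A B C::real. 2 * (D * A - D * B + D * C) = 2 * D * (A - B + C)"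
    by (simp add: algebra_simps)
  have id0: "1 / (t + y) = 1 / (v\<^sup>2 + r\<^sup>2) - 2 * a * v / (v\<^sup>2 + r\<^sup>2)\<^sup>2
      + (2 * a * v)\<^sup>2 / ((v\<^sup>2 + r\<^sup>2)\<^sup>2 * (t + y))"
    by (rule abs_id) (use w W W0 in auto)
  have id: "1 / (t + y) = 1 / (v\<^sup>2 + r\<^sup>2) - 2 * a * v / (v\<^sup>2 + r\<^sup>2)\<^sup>2
      + 4 * a\<^sup>2 * v\<^sup>2 / ((v\<^sup>2 + r\<^sup>2)\<^sup>2 * (v\<^sup>2 + 2 * a * v + r\<^sup>2))"
  proof -
    have sq: "(2 * a * v)\<^sup>2 = 4 * a\<^sup>2 * v\<^sup>2" by (simp add: power_mult_distrib)
    show ?thesis unfolding W by (rule id0[unfolded sq])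
  qed
  have "2 * (DD x t * (1 / (v\<^sup>2 + r\<^sup>2)) - DD x t * (2 * a * v / (v\<^sup>2 + r\<^sup>2)\<^sup>2)
     + DD x t * (4 * a\<^sup>2 * v\<^sup>2 / ((v\<^sup>2 + r\<^sup>2)\<^sup>2 * (v\<^sup>2 + 2 * a * v + r\<^sup>2))))
     = 2 * DD x t * (1 / (v\<^sup>2 + r\<^sup>2) - 2 * a * v / (v\<^sup>2 + r\<^sup>2)\<^sup>2
      + 4 * a\<^sup>2 * v\<^sup>2 / ((v\<^sup>2 + r\<^sup>2)\<^sup>2 * (v\<^sup>2 + 2 * a * v + r\<^sup>2)))"
    by (rule gen)
  also have "\<dots> = 2 * DD x t * (1 / (t + y))"
    by (rule arg_cong[where f="\<lambda>z. 2 * DD x t * z"]) (rule id[symmetric])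
  also have "\<dots> = (t + x) powr (-1/2) * inverse (t + y)"
    unfolding g DD by (simp add: inverse_eq_divide)
  finally show ?thesis unfolding v_def[symmetric] by (rule sym)
qed

lemma alg_up:
  fixes a v r :: real
  assumes a: "a \<ge> 0" and v: "v \<ge> 0" and r: "r > 0"
  shows "4 * a\<^sup>2 * v\<^sup>2 / ((v\<^sup>2 + r\<^sup>2)\<^sup>2 * (v\<^sup>2 + 2 * a * v + r\<^sup>2)) \<le> 4 * a\<^sup>2 * v\<^sup>2 / (v\<^sup>2 + r\<^sup>2) ^ 3"
    and "a > 0 \<Longrightarrow> v > 0 \<Longrightarrow> 4 * a\<^sup>2 * v\<^sup>2 / ((v\<^sup>2 + r\<^sup>2)\<^sup>2 * (v\<^sup>2 + 2 * a * v + r\<^sup>2)) < 4 * a\<^sup>2 * v\<^sup>2 / (v\<^sup>2 + r\<^sup>2) ^ 3"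
proof -
  define w where "w = v\<^sup>2 + r\<^sup>2"
  have w: "w > 0" using r by (simp add: w_def add_nonneg_pos)
  have W: "v\<^sup>2 + 2 * a * v + r\<^sup>2 = w + 2 * a * v" by (simp add: w_def)
  have w2: "(v\<^sup>2 + r\<^sup>2)\<^sup>2 = w\<^sup>2" by (simp add: w_def)
  have c3: "(v\<^sup>2 + r\<^sup>2) ^ 3 = w\<^sup>2 * w" by (simp add: w_def power2_eq_square power3_eq_cube)
  have n: "4 * a\<^sup>2 * v\<^sup>2 \<ge> 0" by simp
  have Wp: "w + 2 * a * v > 0" using w a v by (simp add: add_pos_nonneg)
  have le: "w\<^sup>2 * w \<le> w\<^sup>2 * (w + 2 * a * v)" using w a v by (intro mult_left_mono) auto
  show "4 * a\<^sup>2 * v\<^sup>2 / ((v\<^sup>2 + r\<^sup>2)\<^sup>2 * (v\<^sup>2 + 2 * a * v + r\<^sup>2)) \<le> 4 * a\<^sup>2 * v\<^sup>2 / (v\<^sup>2 + r\<^sup>2) ^ 3"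
    unfolding W c3 w2 by (rule divide_left_mono[OF le n]) (intro mult_pos_pos, use w Wp in auto)
  assume a': "a > 0" and v': "v > 0"
  have lt: "w\<^sup>2 * w < w\<^sup>2 * (w + 2 * a * v)" using w a' v' by (intro mult_strict_left_mono) auto
  have n': "4 * a\<^sup>2 * v\<^sup>2 > 0" using a' v' by simp
  show "4 * a\<^sup>2 * v\<^sup>2 / ((v\<^sup>2 + r\<^sup>2)\<^sup>2 * (v\<^sup>2 + 2 * a * v + r\<^sup>2)) < 4 * a\<^sup>2 * v\<^sup>2 / (v\<^sup>2 + r\<^sup>2) ^ 3"
    unfolding W c3 w2 by (rule divide_strict_left_mono[OF lt n']) (intro mult_pos_pos, use w Wp in auto)
qed

lemma alg_lo:
  fixes a v r :: real
  assumes a: "a \<ge> 0" and v: "v \<ge> 0" and r: "r > 0"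
  shows "(4 * a\<^sup>2 * v\<^sup>2 / (v\<^sup>2 + r\<^sup>2) ^ 3) / (1 + a / r) \<le> 4 * a\<^sup>2 * v\<^sup>2 / ((v\<^sup>2 + r\<^sup>2)\<^sup>2 * (v\<^sup>2 + 2 * a * v + r\<^sup>2))"
    and "a > 0 \<Longrightarrow> v > 0 \<Longrightarrow> v \<noteq> r \<Longrightarrow> (4 * a\<^sup>2 * v\<^sup>2 / (v\<^sup>2 + r\<^sup>2) ^ 3) / (1 + a / r) < 4 * a\<^sup>2 * v\<^sup>2 / ((v\<^sup>2 + r\<^sup>2)\<^sup>2 * (v\<^sup>2 + 2 * a * v + r\<^sup>2))"
proof -
  define w where "w = v\<^sup>2 + r\<^sup>2"
  have w: "w > 0" using r by (simp add: w_def add_nonneg_pos)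
  have s: "1 + a / r > 0" using a r by (simp add: add_pos_nonneg)
  have W: "v\<^sup>2 + 2 * a * v + r\<^sup>2 = w + 2 * a * v" by (simp add: w_def)
  have w2: "(v\<^sup>2 + r\<^sup>2)\<^sup>2 = w\<^sup>2" by (simp add: w_def)
  have c3: "(4 * a\<^sup>2 * v\<^sup>2 / (v\<^sup>2 + r\<^sup>2) ^ 3) / (1 + a / r) = 4 * a\<^sup>2 * v\<^sup>2 / (w\<^sup>2 * ((1 + a / r) * w))"
    by (simp add: w_def power2_eq_square power3_eq_cube mult_ac)
  have key: "(1 + a / r) * w - (w + 2 * a * v) = a / r * (v - r)\<^sup>2"
    using r by (simp add: w_def field_simps power2_eq_square)
  have n: "4 * a\<^sup>2 * v\<^sup>2 \<ge> 0" by simp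
  have Wp: "w + 2 * a * v > 0" using w a v by (simp add: add_pos_nonneg)
  have le: "w\<^sup>2 * (w + 2 * a * v) \<le> w\<^sup>2 * ((1 + a / r) * w)"
  proof -
    have "a / r * (v - r)\<^sup>2 \<ge> 0" using a r by simp
    then have "w + 2 * a * v \<le> (1 + a / r) * w" using key by linarith
    then show ?thesis using w by (intro mult_left_mono) auto
  qed
  show "(4 * a\<^sup>2 * v\<^sup>2 / (v\<^sup>2 + r\<^sup>2) ^ 3) / (1 + a / r) \<le> 4 * a\<^sup>2 * v\<^sup>2 / ((v\<^sup>2 + r\<^sup>2)\<^sup>2 * (v\<^sup>2 + 2 * a * v + r\<^sup>2))"
    unfolding W c3 w2 by (rule divide_left_mono[OF le n]) (intro mult_pos_pos, use w Wp s in auto)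
  assume a': "a > 0" and v': "v > 0" and vr: "v \<noteq> r"
  have "a / r * (v - r)\<^sup>2 > 0" using a' r vr by simp
  then have lt: "w\<^sup>2 * (w + 2 * a * v) < w\<^sup>2 * ((1 + a / r) * w)"
  proof -
    have "w + 2 * a * v < (1 + a / r) * w" using key \<open>a / r * (v - r)\<^sup>2 > 0\<close> by linarith
    then show ?thesis using w by (intro mult_strict_left_mono) auto
  qed
  have n': "4 * a\<^sup>2 * v\<^sup>2 > 0" using a' v' by simp
  show "(4 * a\<^sup>2 * v\<^sup>2 / (v\<^sup>2 + r\<^sup>2) ^ 3) / (1 + a / r) < 4 * a\<^sup>2 * v\<^sup>2 / ((v\<^sup>2 + r\<^sup>2)\<^sup>2 * (v\<^sup>2 + 2 * a * v + r\<^sup>2))"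
    unfolding W c3 w2 by (rule divide_strict_left_mono[OF lt n']) (intro mult_pos_pos, use w Wp s in auto)
qed

theorem mainTheorem2:
  fixes x y :: real
  assumes "x \<ge> 0" and "y > 0"
  shows "\<exists>\<theta>::real.
           R_C x y = pi / (2 * sqrt y) - sqrt x / y + pi * x * \<theta> / (4 * y powr (3/2))
         \<and> 1 / (1 + sqrt (x / y)) \<le> \<theta> \<and> \<theta> \<le> 1
         \<and> ((1 / (1 + sqrt (x / y)) = \<theta> \<or> \<theta> = 1) \<longleftrightarrow> x = 0)"
proof -
  note x = assms(1) and y = assms(2)
  define a where "a = sqrt x"
  define r where "r = sqrt y"
  have a: "a \<ge> 0" "a\<^sup>2 = x" using x by (auto simp: a_def)
  have r: "r > 0" "r\<^sup>2 = y" using y by (auto simp: r_def)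
  define P1 where "P1 v = 1 / (v\<^sup>2 + r\<^sup>2)" for v
  define P2 where "P2 v = 2 * a * v / (v\<^sup>2 + r\<^sup>2)\<^sup>2" for v
  define Q where "Q v = 4 * a\<^sup>2 * v\<^sup>2 / (v\<^sup>2 + r\<^sup>2) ^ 3" for v
  define P3 where "P3 v = 4 * a\<^sup>2 * v\<^sup>2 / ((v\<^sup>2 + r\<^sup>2)\<^sup>2 * (v\<^sup>2 + 2 * a * v + r\<^sup>2))" for v
  define g where "g t = (t + x) powr (-1/2) * inverse (t + y)" for t
  define h3 where "h3 t = DD x t * P3 (vv x t)" for t
  have I1: "((\<lambda>t. DD x t * P1 (vv x t)) has_integral (pi / (2 * r))) {0..}"
    unfolding P1_def by (rule int_p1[OF x r(1)])
  have I2: "((\<lambda>t. DD x t * P2 (vv x t)) has_integral (a / r\<^sup>2)) {0..}"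
    unfolding P2_def by (rule int_p2[OF x r(1) a(1)])
  have IQ: "((\<lambda>t. DD x t * Q (vv x t)) has_integral (a\<^sup>2 * pi / (4 * r ^ 3))) {0..}"
    unfolding Q_def by (rule int_q[OF x r(1) a(1)])
  have E: "g t = 2 * (DD x t * P1 (vv x t) - DD x t * P2 (vv x t) + h3 t)" if "t \<in> {0..}" for t
    using key_identity[OF x y, of t] that unfolding g_def h3_def P1_def P2_def P3_def a_def r_def
    by simp
  have P3Q: "P3 v \<le> Q v" if "v \<ge> 0" for v
    unfolding P3_def Q_def by (rule alg_up(1)[OF a(1) that r(1)])
  have pos: "v\<^sup>2 + r\<^sup>2 > 0" "v\<^sup>2 + 2 * a * v + r\<^sup>2 > 0" if "v \<ge> 0" for v
    using that a r by (auto intro!: add_pos_nonneg add_nonneg_pos)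
  have P3nn: "0 \<le> P3 v" if "v \<ge> 0" for v
    unfolding P3_def by (intro divide_nonneg_pos mult_pos_pos) (use pos[OF that] in auto)
  have contQ: "continuous_on {0..} Q" "continuous_on {0..} P3"
    unfolding Q_def P3_def by (intro continuous_intros; use pos in force)+
  have int3: "h3 integrable_on {0..}"
  proof (cases "x = 0")
    case True
    then have "a = 0" by (simp add: a_def)
    then have "h3 = (\<lambda>_. 0)" by (simp add: h3_def P3_def fun_eq_iff)
    then show ?thesis by (simp add: integrable_0)
  next
    case False
    then have x0: "x > 0" using x by simp
    show ?thesis
    proof (rule integrable_dom)
      show "continuous_on {0..} h3" unfolding h3_def by (rule cont_comp[OF x0 contQ(2)])
      show "(\<lambda>t. DD x t * Q (vv x t)) integrable_on {0..}" using IQ by blast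
      show "\<bar>h3 t\<bar> \<le> DD x t * Q (vv x t)" if "t \<ge> 0" for t
      proof -
        have v: "vv x t \<ge> 0" using vv_nonneg[OF x that] .
        have "DD x t \<ge> 0" using that x by (simp add: DD_def)
        then show ?thesis unfolding h3_def using P3nn[OF v] P3Q[OF v]
          by (simp add: abs_mult mult_left_mono)
      qed
    qed
  qed
  define I3 where "I3 = integral {0..} h3"
  have I3: "(h3 has_integral I3) {0..}" using int3 unfolding I3_def by blast
  have Ig: "(g has_integral 2 * (pi / (2 * r) - a / r\<^sup>2 + I3)) {0..}"
  proof -
    have "((\<lambda>t. 2 * (DD x t * P1 (vv x t) - DD x t * P2 (vv x t) + h3 t)) has_integral
        2 * (pi / (2 * r) - a / r\<^sup>2 + I3)) {0..}"
      by (intro has_integral_mult_right has_integral_add has_integral_diff I1 I2 I3)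
    then show ?thesis by (rule has_integral_eq[rotated]) (use E in auto)
  qed
  have RC: "R_C x y = pi / (2 * r) - a / r\<^sup>2 + I3"
  proof -
    have RCg: "R_C x y = 1/2 * integral {0..} g" unfolding R_C_def g_def by (rule refl)
    show ?thesis unfolding RCg integral_unique[OF Ig] by (simp add: algebra_simps)
  qed
  have y32: "y powr (3/2) = r ^ 3"
  proof -
    have "y powr (3/2) = y powr (1 + 1/2)" by simp
    also have "\<dots> = y powr 1 * y powr (1/2)" by (rule powr_add)
    also have "\<dots> = y * sqrt y" using y by (simp add: powr_half_sqrt)
    finally show ?thesis using r by (simp add: r_def power3_eq_cube power2_eq_square)
  qed
  have sxy: "sqrt (x / y) = a / r" by (simp add: a_def r_def real_sqrt_divide)
  have base: "pi / (2 * sqrt y) - sqrt x / y = pi / (2 * r) - a / r\<^sup>2"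
    using r by (simp add: a_def r_def)
  show ?thesis
  proof (cases "x = 0")
    case True
    then have a0: "a = 0" by (simp add: a_def)
    then have "h3 = (\<lambda>_. 0)" by (simp add: h3_def P3_def fun_eq_iff)
    then have "I3 = 0" by (simp add: I3_def)
    show ?thesis
      by (rule exI[of _ 1]) (use RC base sxy True a0 \<open>I3 = 0\<close> in simp)
  next
    case False
    then have x0: "x > 0" using x by simp
    then have a0: "a > 0" by (simp add: a_def)
    define IQv where "IQv = a\<^sup>2 * pi / (4 * r ^ 3)"
    have IQv: "IQv > 0" using a0 r by (simp add: IQv_def)
    have up: "I3 < IQv"
    proof -
      have hi: "((\<lambda>t. DD x t * (Q (vv x t) - P3 (vv x t))) has_integral (IQv - I3)) {0..}"
      proof -
        have "((\<lambda>t. DD x t * Q (vv x t) - h3 t) has_integral (IQv - I3)) {0..}"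
          using has_integral_diff[OF IQ I3] by (simp add: IQv_def)
        then show ?thesis by (rule has_integral_eq[rotated]) (simp add: h3_def algebra_simps)
      qed
      have "integral {0..} (\<lambda>t. DD x t * (Q (vv x t) - P3 (vv x t))) > 0"
      proof (rule integral_pos[of _ 1])
        show "continuous_on {0..} (\<lambda>t. DD x t * (Q (vv x t) - P3 (vv x t)))"
          by (rule cont_comp[OF x0]) (intro continuous_intros contQ)
        show "(\<lambda>t. DD x t * (Q (vv x t) - P3 (vv x t))) integrable_on {0..}" using hi by blast
        show "0 \<le> DD x t * (Q (vv x t) - P3 (vv x t))" if "t \<ge> 0" for t
          using P3Q[OF vv_nonneg[OF x that]] that x by (simp add: DD_def)
        have v1: "vv x 1 > 0" using vv_pos[OF x] by simp
        have "P3 (vv x 1) < Q (vv x 1)"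
          unfolding P3_def Q_def by (rule alg_up(2)[OF a(1) less_imp_le[OF v1] r(1) a0 v1])
        moreover have "DD x 1 > 0" using x by (simp add: DD_def)
        ultimately show "0 < DD x 1 * (Q (vv x 1) - P3 (vv x 1))" by simp
      qed simp
      then show ?thesis using integral_unique[OF hi] by simp
    qed
    have lo: "IQv / (1 + a / r) < I3"
    proof -
      have s: "1 + a / r > 0" using a r by (simp add: add_pos_nonneg)
      have hi: "((\<lambda>t. DD x t * (P3 (vv x t) - Q (vv x t) / (1 + a / r))) has_integral (I3 - IQv / (1 + a / r))) {0..}"
      proof -
        have "((\<lambda>t. h3 t - DD x t * Q (vv x t) / (1 + a / r)) has_integral (I3 - IQv / (1 + a / r))) {0..}"
          using has_integral_diff[OF I3 has_integral_divide[OF IQ]] by (simp add: IQv_def)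
        then show ?thesis by (rule has_integral_eq[rotated]) (simp add: h3_def algebra_simps)
      qed
      define c where "c = 4 * r\<^sup>2 + 4 * r * a"
      have c: "c > 0" unfolding c_def using r(1) a(1) by (intro add_pos_nonneg) auto
      have vc: "vv x c = 2 * r"
      proof -
        have "c + x = (2 * r + a)\<^sup>2" using a by (simp add: c_def power2_eq_square algebra_simps)
        then have "sqrt (c + x) = 2 * r + a" using r a by simp
        then show ?thesis by (simp add: vv_def a_def[symmetric])
      qed
      have "integral {0..} (\<lambda>t. DD x t * (P3 (vv x t) - Q (vv x t) / (1 + a / r))) > 0"
      proof (rule integral_pos[of _ c])
        show "continuous_on {0..} (\<lambda>t. DD x t * (P3 (vv x t) - Q (vv x t) / (1 + a / r)))"
          by (rule cont_comp[OF x0]) (intro continuous_intros contQ, use s in simp)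
        show "(\<lambda>t. DD x t * (P3 (vv x t) - Q (vv x t) / (1 + a / r))) integrable_on {0..}" using hi by blast
        show "0 \<le> DD x t * (P3 (vv x t) - Q (vv x t) / (1 + a / r))" if "t \<ge> 0" for t
          using alg_lo(1)[OF a(1) vv_nonneg[OF x that] r(1)] unfolding P3_def Q_def
          using that x by (simp add: DD_def)
        have "Q (vv x c) / (1 + a / r) < P3 (vv x c)"
          unfolding P3_def Q_def vc by (rule alg_lo(2)) (use a a0 r in auto)
        moreover have "DD x c > 0" using x c by (simp add: DD_def)
        ultimately show "0 < DD x c * (P3 (vv x c) - Q (vv x c) / (1 + a / r))" by simp
      qed (use c in simp)
      then show ?thesis using integral_unique[OF hi] by simp
    qed
    define \<theta> where "\<theta> = I3 / IQv"
    have t1: "\<theta> < 1" using up IQv by (simp add: \<theta>_def)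
    have t2: "1 / (1 + a / r) < \<theta>"
      using lo IQv by (simp add: \<theta>_def field_simps)
    have eq: "pi * x * \<theta> / (4 * y powr (3/2)) = I3"
      unfolding y32 \<theta>_def IQv_def a(2)[symmetric] using a0 r by (simp add: field_simps)
    show ?thesis
      by (rule exI[of _ \<theta>]) (use RC base sxy eq t1 t2 False in auto)
  qed
qed

end
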